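(* Let $k\ge2$, $d\ge2$ even, $\beta>0$, and let $\pi,\hat\pi$ be probability measures on $(0,1)$ with $\pi=\mathcal F_{k,d,\beta}(\hat\pi)$ and $\hat\pi=\hat{\mathcal F}_{k,d,\beta}(\pi)$. Let $h[\pi]=\int\eta\,d\pi(\eta)$ and $\hat h[\hat\pi]=\int\hat\eta\,d\hat\pi(\hat\eta)$. Then $$h[\pi]=1-\hat h[\hat\pi],\qquad \hat h[\hat\pi]=\frac{1-c_\beta h[\pi]^{k-1}}{2-c_\beta h[\pi]^{k-1}}.$$
   Context: $c_\beta=1-e^{-\beta}$. For a probability measure $\pi$ on $(0,1)$ and $\eta\in(0,1)^{k-1}$ let $\hat z(\eta)=2-c_\beta\prod_{j=1}^{k-1}\eta_j$; draw $\eta$ with density $\hat z(\eta)/\int\hat z\,d\pi^{\otimes(k-1)}$ w.r.t. $\pi^{\otimes(k-1)}$; $\hat{\mathcal F}_{k,d,\beta}(\pi)$ is the law of $(1-c_\beta\prod_j\eta_j)/\hat z(\eta)$. For a probability measure $\hat\pi$ on $(0,1)$ and $\hat\eta\in(0,1)^{d-1}$ let $z(\hat\eta)=\prod_{j=1}^{d/2-1}\hat\eta_j\prod_{j=d/2}^{d-1}(1-\hat\eta_j)+\prod_{j=1}^{d/2-1}(1-\hat\eta_j)\prod_{j=d/2}^{d-1}\hat\eta_j$; draw $\hat\eta$ with density $z(\hat\eta)/\int z\,d\hat\pi^{\otimes(d-1)}$ w.r.t. $\hat\pi^{\otimes(d-1)}$; $\mathcal F_{k,d,\beta}(\hat\pi)$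 is the law of $\prod_{j=1}^{d/2-1}\hat\eta_j\prod_{j=d/2}^{d-1}(1-\hat\eta_j)/z(\hat\eta)$. *)

theory Defs
  imports "HOL-Probability.Probability"
begin

definition c_beta :: "real \<Rightarrow> real" where
  "c_beta \<beta> = 1 - exp (- \<beta>)"

(* Paper index j = 1..k-1 is rendered as j \<in> {..<k-1} (shift by one). *)
definition zhat :: "nat \<Rightarrow> real \<Rightarrow> (nat \<Rightarrow> real) \<Rightarrow> real" where
  "zhat k \<beta> \<eta> = 2 - c_beta \<beta> * (\<Prod>j<k-1. \<eta> j)"

definition Fhat :: "nat \<Rightarrow> nat \<Rightarrow> real \<Rightarrow> real measure \<Rightarrow> real measure" where
  "Fhat k d \<beta> \<pi> =
     (let M = PiM {..<k-1} (\<lambda>_. \<pi>);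
          Z = (\<integral>\<eta>. zhat k \<beta> \<eta> \<partial>M)
      in distr (density M (\<lambda>\<eta>. ennreal (zhat k \<beta> \<eta> / Z))) borel
           (\<lambda>\<eta>. (1 - c_beta \<beta> * (\<Prod>j<k-1. \<eta> j)) / zhat k \<beta> \<eta>))"

(* Paper indices j = 1..d/2-1 become {..<d div 2 - 1}; j = d/2..d-1 become {d div 2 - 1..<d-1}. *)
definition zF_num :: "nat \<Rightarrow> (nat \<Rightarrow> real) \<Rightarrow> real" where
  "zF_num d \<eta> = (\<Prod>j<d div 2 - 1. \<eta> j) * (\<Prod>j\<in>{d div 2 - 1..<d-1}. 1 - \<eta> j)"

definition zF :: "nat \<Rightarrow> (nat \<Rightarrow> real) \<Rightarrow> real" where
  "zF d \<eta> = zF_num d \<eta> + (\<Prod>j<d div 2 - 1. 1 - \<eta> j) * (\<Prod>j\<in>{d div 2 - 1..<d-1}. \<eta> j)"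

definition F :: "nat \<Rightarrow> nat \<Rightarrow> real \<Rightarrow> real measure \<Rightarrow> real measure" where
  "F k d \<beta> \<pi>h =
     (let M = PiM {..<d-1} (\<lambda>_. \<pi>h);
          Z = (\<integral>\<eta>. zF d \<eta> \<partial>M)
      in distr (density M (\<lambda>\<eta>. ennreal (zF d \<eta> / Z))) borel
           (\<lambda>\<eta>. zF_num d \<eta> / zF d \<eta>))"

(* probability measure on (0,1), represented as a Borel probability measure on the reals
   concentrated on the open interval (0,1) *)
definition prob_on_01 :: "real measure \<Rightarrow> bool" where
  "prob_on_01 \<pi> \<longleftrightarrow> prob_space \<pi> \<and> sets \<pi> = sets borel \<and> emeasure \<pi> {0<..<1} = 1"

end

theory Submission imports Defs begin

lemma pp_interp:
  assumes "prob_space \<mu>" shows "product_prob_space (\<lambda>_. \<mu>)"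
  using assms by (simp add: product_prob_space_def product_prob_space_axioms_def
     product_sigma_finite_def prob_space_imp_sigma_finite)

lemma p01_AE:
  assumes "prob_on_01 \<mu>" shows "AE x in \<mu>. 0 < x \<and> x < 1"
proof -
  interpret prob_space \<mu> using assms by (simp add: prob_on_01_def)
  have s: "sets \<mu> = sets borel" using assms by (simp add: prob_on_01_def)
  have "{0<..<1::real} \<in> sets \<mu>" using s by simp
  moreover have "emeasure \<mu> {0<..<1} = 1" using assms by (simp add: prob_on_01_def)
  ultimately have "AE x in \<mu>. x \<in> {0<..<1}" using AE_prob_1[of "{0<..<1}"] by (simp add: emeasure_eq_measure)
  then show ?thesis by simp
qed

lemma p01_int:
  assumes "prob_on_01 \<mu>" shows "integrable \<mu> (\<lambda>x. x)" "integrable \<mu> (\<lambda>x. 1 - x)"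
    "0 \<le> (\<integral>x. x \<partial>\<mu>)" "(\<integral>x. x \<partial>\<mu>) \<le> 1" "(\<integral>x. 1 - x \<partial>\<mu>) = 1 - (\<integral>x. x \<partial>\<mu>)"
proof -
  interpret prob_space \<mu> using assms by (simp add: prob_on_01_def)
  have s: "sets \<mu> = sets borel" using assms by (simp add: prob_on_01_def)
  have ae: "AE x in \<mu>. 0 < x \<and> x < 1" by (rule p01_AE[OF assms])
  have m: "(\<lambda>x::real. x) \<in> borel_measurable \<mu>" using s by (simp add: measurable_cong_sets[OF s refl])
  show i1: "integrable \<mu> (\<lambda>x. x)"
    by (rule integrable_const_bound[where B=1]) (use ae m in auto)
  show i2: "integrable \<mu> (\<lambda>x. 1 - x)" using i1 by simp
  show "0 \<le> (\<integral>x. x \<partial>\<mu>)" using ae by (intro integral_nonneg_AE) auto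
  have "(\<integral>x. x \<partial>\<mu>) \<le> (\<integral>x. 1 \<partial>\<mu>)" using ae i1 by (intro integral_mono_AE) auto
  then show "(\<integral>x. x \<partial>\<mu>) \<le> 1" by (simp add: prob_space)
  show "(\<integral>x. 1 - x \<partial>\<mu>) = 1 - (\<integral>x. x \<partial>\<mu>)" using i1 by (simp add: prob_space)
qed

lemma p01_int_if:
  assumes "prob_on_01 \<mu>"
  shows "integrable \<mu> (\<lambda>x. if b then x else 1 - x)" "integrable \<mu> (\<lambda>x. if b then 1 - x else x)"
  using p01_int[OF assms] by (cases b; simp)+

lemma prod_int:
  fixes b :: "nat \<Rightarrow> bool" and I :: "nat set"
  assumes "prob_on_01 \<mu>" "finite I"
  shows "(\<integral>\<eta>. (\<Prod>j\<in>I. if b j then \<eta> j else 1 - \<eta> j) \<partial>PiM I (\<lambda>_. \<mu>))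
       = (\<Prod>j\<in>I. if b j then (\<integral>x. x \<partial>\<mu>) else 1 - (\<integral>x. x \<partial>\<mu>))"
proof -
  have ps: "prob_space \<mu>" using assms by (simp add: prob_on_01_def)
  interpret product_prob_space "\<lambda>_. \<mu>" using pp_interp[OF ps] .
  have "(\<integral>\<eta>. (\<Prod>j\<in>I. (\<lambda>j x. if b j then x else 1 - x) j (\<eta> j)) \<partial>PiM I (\<lambda>_. \<mu>))
      = (\<Prod>j\<in>I. integral\<^sup>L \<mu> ((\<lambda>j x. if b j then x else 1 - x) j))"
    proof (rule product_integral_prod[OF assms(2)])
    fix i assume "i \<in> I"
    show "integrable \<mu> ((\<lambda>j x. if b j then x else 1 - x) i)"
      using p01_int[OF assms(1)] by (cases "b i") auto
  qed
  also have "\<dots> = (\<Prod>j\<in>I. if b j then (\<integral>x. x \<partial>\<mu>) else 1 - (\<integral>x. x \<partial>\<mu>))"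
    by (rule prod.cong) (auto simp: p01_int[OF assms(1)])
  finally show ?thesis by simp
qed

lemma PiM_AE01:
  assumes "prob_on_01 \<mu>" "finite I"
  shows "AE \<eta> in PiM I (\<lambda>_. \<mu>). \<forall>j\<in>I. 0 < \<eta> j \<and> \<eta> j < 1"
proof -
  have ps: "prob_space \<mu>" using assms by (simp add: prob_on_01_def)
  show ?thesis
  proof (rule AE_ball_countable')
    fix j assume "j \<in> I"
    show "AE \<eta> in PiM I (\<lambda>_. \<mu>). 0 < \<eta> j \<and> \<eta> j < 1"
      using AE_PiM_component[of I "\<lambda>_. \<mu>" j "\<lambda>x. 0 < x \<and> x < 1"] ps \<open>j \<in> I\<close> p01_AE[OF assms(1)] by blast
  qed (simp add: countable_finite assms(2))
qed

lemma comp_meas: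
  assumes "sets \<pi> = sets borel" "j \<in> I"
  shows "(\<lambda>\<eta>. \<eta> j :: real) \<in> borel_measurable (PiM I (\<lambda>_. \<pi>))"
proof -
  have "(\<lambda>\<eta>. \<eta> j) \<in> measurable (PiM I (\<lambda>_. \<pi>)) \<pi>"
    using assms(2) by (rule measurable_component_singleton)
  then show ?thesis using measurable_cong_sets[OF refl assms(1)] by blast
qed

lemma comp_meas2:
  assumes "sets \<pi> = sets borel" "j \<in> I"
  shows "(\<lambda>\<eta>. if b then \<eta> j else 1 - \<eta> j :: real) \<in> borel_measurable (PiM I (\<lambda>_. \<pi>))"
  using comp_meas[OF assms] by (cases b) auto

lemma comp_meas3:
  assumes "sets \<pi> = sets borel" "j \<in> I"
  shows "(\<lambda>\<eta>. if b then 1 - \<eta> j else \<eta> j :: real) \<in> borel_measurable (PiM I (\<lambda>_. \<pi>))"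
  using comp_meas[OF assms] by (cases b) auto

lemma c_beta_bounds: "\<beta> > 0 \<Longrightarrow> 0 < c_beta \<beta> \<and> c_beta \<beta> < 1"
  by (simp add: c_beta_def)

lemma Fhat_mean:
  assumes p: "prob_on_01 \<pi>" and b: "\<beta> > 0"
  defines "h \<equiv> (\<integral>x. x \<partial>\<pi>)"
  shows "(\<integral>x. x \<partial>Fhat k d \<beta> \<pi>) = (1 - c_beta \<beta> * h ^ (k-1)) / (2 - c_beta \<beta> * h ^ (k-1))"
proof -
  define M where "M = PiM {..<k-1} (\<lambda>_. \<pi>)"
  define c where "c = c_beta \<beta>"
  have c: "0 < c" "c < 1" using c_beta_bounds[OF b] by (auto simp: c_def)
  have ps: "prob_space \<pi>" using p by (simp add: prob_on_01_def)
  have s: "sets \<pi> = sets borel" using p by (simp add: prob_on_01_def)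
  interpret pp: product_prob_space "\<lambda>_. \<pi>" "{..<k-1}" using pp_interp[OF ps] by simp
  interpret P: prob_space M unfolding M_def by (rule pp.P.prob_space_axioms)
  have h01: "0 \<le> h" "h \<le> 1" using p01_int[OF p] by (auto simp: h_def)
  have ae: "AE \<eta> in M. \<forall>j\<in>{..<k-1}. 0 < \<eta> j \<and> \<eta> j < 1"
    unfolding M_def by (rule PiM_AE01[OF p]) simp
  have mP[measurable]: "(\<lambda>\<eta>. \<Prod>j<k-1. \<eta> j) \<in> borel_measurable M"
    unfolding M_def by (intro borel_measurable_prod comp_meas[OF s]) simp
  have aeP: "AE \<eta> in M. 0 \<le> (\<Prod>j<k-1. \<eta> j) \<and> (\<Prod>j<k-1. \<eta> j) \<le> 1"
    using ae by eventually_elim (auto intro: prod_nonneg prod_le_1 less_imp_le)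
  have iP: "integrable M (\<lambda>\<eta>. \<Prod>j<k-1. \<eta> j)"
    by (rule P.integrable_const_bound[where B=1]) (use aeP mP in auto)
  have intP: "(\<integral>\<eta>. (\<Prod>j<k-1. \<eta> j) \<partial>M) = h ^ (k-1)"
    using prod_int[OF p, of "{..<k-1}" "\<lambda>_. True"] by (simp add: M_def h_def)
  have Z: "(\<integral>\<eta>. zhat k \<beta> \<eta> \<partial>M) = 2 - c * h ^ (k-1)"
    unfolding zhat_def c_def[symmetric] using iP intP by (simp add: P.prob_space)
  define Z where "Z = 2 - c * h ^ (k-1)"
  have hk: "h ^ (k-1) \<le> 1" using h01 by (simp add: power_le_one)
  have hk0: "0 \<le> h ^ (k-1)" using h01 by simp
  have Zpos: "Z > 0" unfolding Z_def using c hk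
    by (smt (verit) mult_left_le_one_le hk0)
  have mz[measurable]: "(\<lambda>\<eta>. zhat k \<beta> \<eta> / Z) \<in> borel_measurable M"
    unfolding zhat_def by measurable
  have aez: "AE \<eta> in M. 0 < zhat k \<beta> \<eta>"
    using aeP by eventually_elim (use c in \<open>simp add: zhat_def c_def, smt (verit) mult_left_le_one_le\<close>)
  have mT: "(\<lambda>\<eta>. (1 - c_beta \<beta> * (\<Prod>j<k-1. \<eta> j)) / zhat k \<beta> \<eta>) \<in> measurable (density M (\<lambda>\<eta>. ennreal (zhat k \<beta> \<eta> / Z))) borel"
    unfolding measurable_cong_sets[OF sets_density refl] zhat_def by measurable
  have mT2: "(\<lambda>\<eta>. (1 - c * (\<Prod>j<k-1. \<eta> j)) / zhat k \<beta> \<eta>) \<in> borel_measurable M"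
    unfolding zhat_def by measurable
  have "(\<integral>x. x \<partial>Fhat k d \<beta> \<pi>) = (\<integral>\<eta>. (1 - c * (\<Prod>j<k-1. \<eta> j)) / zhat k \<beta> \<eta>
          \<partial>density M (\<lambda>\<eta>. ennreal (zhat k \<beta> \<eta> / Z)))"
    unfolding Fhat_def Let_def M_def[symmetric] Z c_def[symmetric] Z_def[symmetric]
    by (rule integral_distr[OF mT[folded c_def]]) simp
  also have "\<dots> = (\<integral>\<eta>. (zhat k \<beta> \<eta> / Z) * ((1 - c * (\<Prod>j<k-1. \<eta> j)) / zhat k \<beta> \<eta>) \<partial>M)"
    by (subst integral_density[OF mT2 mz]) (use aez Zpos in \<open>auto elim!: eventually_mono\<close>)
  also have "\<dots> = (\<integral>\<eta>. (1 - c * (\<Prod>j<k-1. \<eta> j)) / Z \<partial>M)"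
  proof (rule integral_cong_AE)
    show "(\<lambda>\<eta>. (zhat k \<beta> \<eta> / Z) * ((1 - c * (\<Prod>j<k-1. \<eta> j)) / zhat k \<beta> \<eta>)) \<in> borel_measurable M"
      unfolding zhat_def by measurable
    show "(\<lambda>\<eta>. (1 - c * (\<Prod>j<k-1. \<eta> j)) / Z) \<in> borel_measurable M"
      by measurable
    show "AE \<eta> in M. (zhat k \<beta> \<eta> / Z) * ((1 - c * (\<Prod>j<k-1. \<eta> j)) / zhat k \<beta> \<eta>) = (1 - c * (\<Prod>j<k-1. \<eta> j)) / Z"
      using aez by eventually_elim simp
  qed
  also have "\<dots> = (1 - c * h ^ (k-1)) / Z"
    using iP intP by (simp add: P.prob_space diff_divide_distrib)
  finally show ?thesis by (simp add: Z_def c_def)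
qed

lemma prod_split_if:
  fixes g1 g2 :: "nat \<Rightarrow> real"
  assumes "m \<le> n"
  shows "(\<Prod>j<n. if j < m then g1 j else g2 j) = (\<Prod>j<m. g1 j) * (\<Prod>j\<in>{m..<n}. g2 j)"
proof -
  have u: "{..<n} = {..<m} \<union> {m..<n}" using assms by auto
  have "(\<Prod>j<n. if j < m then g1 j else g2 j) =
     (\<Prod>j<m. if j < m then g1 j else g2 j) * (\<Prod>j\<in>{m..<n}. if j < m then g1 j else g2 j)"
    unfolding u by (rule prod.union_disjoint) auto
  also have "\<dots> = (\<Prod>j<m. g1 j) * (\<Prod>j\<in>{m..<n}. g2 j)"
    by (intro arg_cong2[where f="(*)"] prod.cong) auto
  finally show ?thesis .
qed

lemma zF_num_eq: "d \<ge> 2 \<Longrightarrow> zF_num d \<eta> = (\<Prod>j<d-1. if j < d div 2 - 1 then \<eta> j else 1 - \<eta> j)"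
  unfolding zF_num_def by (subst prod_split_if) auto

lemma zF_eq: "d \<ge> 2 \<Longrightarrow> zF d \<eta> = zF_num d \<eta> + (\<Prod>j<d-1. if j < d div 2 - 1 then 1 - \<eta> j else \<eta> j)"
  unfolding zF_def by (subst prod_split_if) auto

lemma F_mean:
  assumes p: "prob_on_01 \<pi>h" and d: "d \<ge> 2" "even d"
  defines "hh \<equiv> (\<integral>x. x \<partial>\<pi>h)"
  assumes hh: "0 < hh" "hh < 1"
  shows "(\<integral>x. x \<partial>F k d \<beta> \<pi>h) = 1 - hh"
proof -
  define M where "M = PiM {..<d-1} (\<lambda>_. \<pi>h)"
  define m where "m = d div 2 - 1"
  have dm: "d - 1 = m + (m + 1)" "m \<le> d - 1" using d by (auto simp: m_def elim!: evenE)
  have sw: "\<And>P a b. (if \<not> P then a else b) = (if P then b else (a::real))" by simp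
  have dmm: "d - 1 - m = m + 1" using dm by simp
  define N where "N = (\<lambda>\<eta>::nat\<Rightarrow>real. \<Prod>j<d-1. if j < m then \<eta> j else 1 - \<eta> j)"
  define B where "B = (\<lambda>\<eta>::nat\<Rightarrow>real. \<Prod>j<d-1. if j < m then 1 - \<eta> j else \<eta> j)"
  have zn: "zF_num d = N" using zF_num_eq[OF d(1)] by (auto simp: N_def m_def)
  have zf: "zF d = (\<lambda>\<eta>. N \<eta> + B \<eta>)" using zF_eq[OF d(1)] by (auto simp: B_def zn m_def)
  have ps: "prob_space \<pi>h" using p by (simp add: prob_on_01_def)
  have s: "sets \<pi>h = sets borel" using p by (simp add: prob_on_01_def)
  interpret pp: product_prob_space "\<lambda>_. \<pi>h" "{..<d-1}" using pp_interp[OF ps] by simp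
  interpret P: prob_space M unfolding M_def by (rule pp.P.prob_space_axioms)
  have ae: "AE \<eta> in M. \<forall>j\<in>{..<d-1}. 0 < \<eta> j \<and> \<eta> j < 1"
    unfolding M_def by (rule PiM_AE01[OF p]) simp
  have mN[measurable]: "N \<in> borel_measurable M"
    unfolding M_def N_def
    by (intro borel_measurable_prod) (auto intro!: comp_meas2[OF s])
  have mB[measurable]: "B \<in> borel_measurable M"
    unfolding M_def B_def
    by (intro borel_measurable_prod) (auto intro!: comp_meas3[OF s])
  have aeN: "AE \<eta> in M. 0 < N \<eta> \<and> 0 < B \<eta>"
    using ae by eventually_elim (auto simp: N_def B_def intro!: prod_pos)
  have cN: "(\<Prod>j<d-1. if j < m then hh else 1 - hh) = hh ^ m * (1 - hh) ^ (m + 1)"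
    unfolding prod_split_if[OF dm(2)] prod_constant card_lessThan card_atLeastLessThan dmm ..
  have cB: "(\<Prod>j<d-1. if \<not> j < m then hh else 1 - hh) = (1 - hh) ^ m * hh ^ (m + 1)"
    unfolding sw prod_split_if[OF dm(2)] prod_constant card_lessThan card_atLeastLessThan dmm ..
  have intN: "(\<integral>\<eta>. N \<eta> \<partial>M) = hh ^ m * (1 - hh) ^ (m + 1)"
    using prod_int[OF p, of "{..<d-1}" "\<lambda>j. j < m"] cN
    by (simp only: M_def N_def hh_def finite_lessThan simp_thms)
  have intB: "(\<integral>\<eta>. B \<eta> \<partial>M) = (1 - hh) ^ m * hh ^ (m + 1)"
    using prod_int[OF p, of "{..<d-1}" "\<lambda>j. \<not> j < m"] cB
    unfolding M_def B_def hh_def sw by (simp only: finite_lessThan simp_thms)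
  have iN: "integrable M N"
    unfolding M_def N_def
    by (rule pp.product_integrable_prod) (auto intro: p01_int_if[OF p])
  have iB: "integrable M B"
    unfolding M_def B_def
    by (rule pp.product_integrable_prod) (auto intro: p01_int_if[OF p])
  define Z where "Z = hh ^ m * (1 - hh) ^ (m + 1) + (1 - hh) ^ m * hh ^ (m + 1)"
  have Z: "(\<integral>\<eta>. zF d \<eta> \<partial>M) = Z" unfolding zf Z_def using iN iB intN intB by simp
  have Zeq: "Z = hh ^ m * (1 - hh) ^ m" unfolding Z_def by (simp add: algebra_simps)
  have Zpos: "Z > 0" unfolding Zeq using hh by simp
  have mT: "(\<lambda>\<eta>. N \<eta> / (N \<eta> + B \<eta>)) \<in> measurable (density M (\<lambda>\<eta>. ennreal ((N \<eta> + B \<eta>) / Z))) borel"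
    unfolding measurable_cong_sets[OF sets_density refl] by measurable
  have mT2: "(\<lambda>\<eta>. N \<eta> / (N \<eta> + B \<eta>)) \<in> borel_measurable M" by measurable
  have mz: "(\<lambda>\<eta>. (N \<eta> + B \<eta>) / Z) \<in> borel_measurable M" by measurable
  have "(\<integral>x. x \<partial>F k d \<beta> \<pi>h) = (\<integral>\<eta>. N \<eta> / (N \<eta> + B \<eta>)
          \<partial>density M (\<lambda>\<eta>. ennreal ((N \<eta> + B \<eta>) / Z)))"
    unfolding F_def Let_def M_def[symmetric] Z zn zf Z[unfolded zf]
    by (rule integral_distr[OF mT]) simp
  also have "\<dots> = (\<integral>\<eta>. ((N \<eta> + B \<eta>) / Z) * (N \<eta> / (N \<eta> + B \<eta>)) \<partial>M)"
  proof (subst integral_density[OF mT2 mz])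
    show "AE \<eta> in M. 0 \<le> (N \<eta> + B \<eta>) / Z" using aeN by eventually_elim (use Zpos in simp)
  qed simp
  also have "\<dots> = (\<integral>\<eta>. N \<eta> / Z \<partial>M)"
  proof (rule integral_cong_AE)
    show "(\<lambda>\<eta>. ((N \<eta> + B \<eta>) / Z) * (N \<eta> / (N \<eta> + B \<eta>))) \<in> borel_measurable M"
      by measurable
    show "(\<lambda>\<eta>. N \<eta> / Z) \<in> borel_measurable M"
      by measurable
    show "AE \<eta> in M. ((N \<eta> + B \<eta>) / Z) * (N \<eta> / (N \<eta> + B \<eta>)) = N \<eta> / Z"
      using aeN by eventually_elim simp
  qed
  also have "\<dots> = hh ^ m * (1 - hh) ^ (m + 1) / Z"
    using intN by simp
  also have "\<dots> = 1 - hh" unfolding Zeq using hh by (simp add: field_simps)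
  finally show ?thesis .
qed

theorem lemma4p2:
  fixes k d :: nat and \<beta> :: real and \<pi> \<pi>h :: "real measure"
  assumes "k \<ge> 2" and "d \<ge> 2" and "even d" and "\<beta> > 0"
    and "prob_on_01 \<pi>" and "prob_on_01 \<pi>h"
    and "\<pi> = F k d \<beta> \<pi>h" and "\<pi>h = Fhat k d \<beta> \<pi>"
  shows "(\<integral>x. x \<partial>\<pi>) = 1 - (\<integral>x. x \<partial>\<pi>h)
    \<and> (\<integral>x. x \<partial>\<pi>h) = (1 - c_beta \<beta> * (\<integral>x. x \<partial>\<pi>) ^ (k-1)) / (2 - c_beta \<beta> * (\<integral>x. x \<partial>\<pi>) ^ (k-1))"
proof -
  define h where "h = (\<integral>x. x \<partial>\<pi>)"
  define hh where "hh = (\<integral>x. x \<partial>\<pi>h)"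
  define c where "c = c_beta \<beta>"
  have c: "0 < c" "c < 1" using c_beta_bounds[OF assms(4)] by (auto simp: c_def)
  have h01: "0 \<le> h" "h \<le> 1" using p01_int[OF assms(5)] by (auto simp: h_def)
  have hk: "h ^ (k-1) \<le> 1" "0 \<le> h ^ (k-1)" using h01 by (auto simp: power_le_one)
  have e2: "hh = (1 - c * h ^ (k-1)) / (2 - c * h ^ (k-1))"
    unfolding hh_def h_def c_def using Fhat_mean[OF assms(5,4), of k d] assms(8) by simp
  have ch: "c * h ^ (k-1) \<le> c" using hk c by (simp add: mult_left_le_one_le)
  define t where "t = c * h ^ (k-1)"
  have t: "t < 1" using ch c unfolding t_def by linarith
  have "0 < hh" "hh < 1" unfolding e2 t_def[symmetric] using t by (auto simp: field_simps)
  then have e1: "h = 1 - hh"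
    unfolding h_def hh_def using F_mean[OF assms(6,2,3), of k \<beta>] assms(7) by simp
  show ?thesis using e1 e2 by (simp add: h_def hh_def c_def)
qed

end
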